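(* Let $X$ be a Tychonoff space and $\mathcal A\subset\mathcal P(X)$ a family satisfying (A1)–(A4). For each $A\in\mathcal A$ let $cA$ and $dA$ be Hausdorff compactifications of $A$ (with $A$ carrying the subspace topology), and write $c\mathcal A=(cA)_{A\in\mathcal A}$, $d\mathcal A=(dA)_{A\in\mathcal A}$. (i) For every space $\mathcal E=(E(A))_{A\in\mathcal A}$ as in the definition of amalgamation and every regular space $Z$, a map $f:\mathrm{Amg}(X,\mathcal E)\to Z$ is continuous iff $f|_X$ and all $f|_{E(A)}$, $A\in\mathcal A$, are continuous. (ii) $\mathrm{Amg}(X,c\mathcal A)$ is a (Hausdorff) compactification of $X$. (iii) If $cA\preceq dA$ for every $A\in\mathcal A$, then $\mathrm{Amg}(X,c\mathcal A)\preceq\mathrm{Amg}(X,d\mathcal A)$. (iv) For every compactification $cX$ of $X$, $\mathrm{Amg}(X,(\overline A^{cX})_{A\in\mathcal A})\succeq cX$. (v) In particular, $\beta X=\mathrm{Amg}(X,(\beta A)_{A\in\mathcal A})$.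
   Context: Conditions on $\mathcal A\subset\mathcal P(X)$: (A1) every $A\in\mathcal A$ is clopen in $X$; (A2) $A\cap A'$ is compact for distinct $A,A'\in\mathcal A$; (A3) $K:=X\setminus\bigcup\mathcal A$ is compact; (A4) for every collection $\mathcal U$ of open subsets of $X$ covering $K$ there is a finite $\mathcal A'\subset\mathcal A$ such that for each $A\in\mathcal A\setminus\mathcal A'$ some $U\in\mathcal U$ satisfies $U\cup\bigcup\mathcal A'\supset A$. Amalgamation: let $\mathcal E=(E(A))_{A\in\mathcal A}$ be topological spaces with $A$ a dense subspace of $E(A)$. The set $\mathrm{Amg}(X,\mathcal E)=X\cup\bigcup_{A}E(A)$ is formed so that $X\cap E(A)=A$ and $E(A)\cap E(A')=A\cap A'$ for $A\ne A'$. For $P\subset Q$ spaces and $G$ open in $P$, $W^Q_P(G)$ denotes the largest open $W\subset Q$ with $W\cap P=G$. For $U$ open in $X$, $V_U=U\cup\bigcup_{A\in\mathcal A}W^{E(A)}_A(U\cap A)$. The topology of $\mathrm{Amg}(X,\mathcal E)$ has as basis all open subsets of each $E(A)$ and all $V_U$, $U$ open in $X$. Compactification order: $cX\succeq dX$ if there is a continuous $f:cX\to dX$ with $f|_X=\mathrm{id}_X$. $\beta$ denotes Čech–Stone compactification. *)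

theory Defs
  imports "HOL-Analysis.Analysis"
begin

definition Tychonoff_space :: "'a topology \<Rightarrow> bool" where
  "Tychonoff_space X \<longleftrightarrow> completely_regular_space X \<and> Hausdorff_space X"

definition good_family :: "'a topology \<Rightarrow> 'a set set \<Rightarrow> bool" where
  "good_family X \<A> \<longleftrightarrow>
     (\<forall>A\<in>\<A>. A \<subseteq> topspace X) \<and>
     (\<forall>A\<in>\<A>. openin X A \<and> closedin X A) \<and>
     (\<forall>A\<in>\<A>. \<forall>A'\<in>\<A>. A \<noteq> A' \<longrightarrow> compactin X (A \<inter> A')) \<and>
     compactin X (topspace X - \<Union>\<A>) \<and>
     (\<forall>\<U>. (\<forall>U\<in>\<U>. openin X U) \<and> topspace X - \<Union>\<A> \<subseteq> \<Union>\<U> \<longrightarrow>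
        (\<exists>\<A>'. finite \<A>' \<and> \<A>' \<subseteq> \<A> \<and>
           (\<forall>A\<in>\<A> - \<A>'. \<exists>U\<in>\<U>. A \<subseteq> U \<union> \<Union>\<A>')))"

definition is_compactification :: "'a topology \<Rightarrow> 'b topology \<Rightarrow> ('a \<Rightarrow> 'b) \<Rightarrow> bool" where
  "is_compactification X C e \<longleftrightarrow>
     compact_space C \<and> Hausdorff_space C \<and> embedding_map X C e \<and>
     C closure_of (e ` topspace X) = topspace C"

definition compactification_le ::
  "'a topology \<Rightarrow> 'b topology \<Rightarrow> ('a \<Rightarrow> 'b) \<Rightarrow> 'c topology \<Rightarrow> ('a \<Rightarrow> 'c) \<Rightarrow> bool" where
  "compactification_le X C e D d \<longleftrightarrow>
     (\<exists>f. continuous_map D C f \<and> (\<forall>x\<in>topspace X. f (d x) = e x))"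

definition is_stone_cech :: "'a topology \<Rightarrow> 'b topology \<Rightarrow> ('a \<Rightarrow> 'b) \<Rightarrow> bool" where
  "is_stone_cech X C e \<longleftrightarrow> is_compactification X C e \<and>
     (\<forall>f. continuous_map X euclideanreal f \<and> bounded (f ` topspace X) \<longrightarrow>
        (\<exists>g. continuous_map C euclideanreal g \<and> (\<forall>x\<in>topspace X. g (e x) = f x)))"

definition amalg_data ::
  "'a topology \<Rightarrow> 'a set set \<Rightarrow> ('a set \<Rightarrow> 'b topology) \<Rightarrow> ('a set \<Rightarrow> 'a \<Rightarrow> 'b) \<Rightarrow> bool" where
  "amalg_data X \<A> E j \<longleftrightarrow>
     (\<forall>A\<in>\<A>. embedding_map (subtopology X A) (E A) (j A) \<and>
             (E A) closure_of (j A ` A) = topspace (E A))"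

text \<open>The amalgamated set is modelled on the type 'a + ('a set \<times> 'b): points of X are
  Inl x, points of E(A) \<setminus> A are Inr (A, e). amg_in j A maps E(A) into it, identifying
  j A a with Inl a.\<close>
definition amg_in :: "('a set \<Rightarrow> 'a \<Rightarrow> 'b) \<Rightarrow> 'a set \<Rightarrow> 'b \<Rightarrow> 'a + 'a set \<times> 'b" where
  "amg_in j A y = (if y \<in> j A ` A then Inl (inv_into A (j A) y) else Inr (A, y))"

definition Wext :: "'b topology \<Rightarrow> 'b set \<Rightarrow> 'b set \<Rightarrow> 'b set" where
  "Wext Q P G = \<Union>{W. openin Q W \<and> W \<inter> P = G}"

definition amg_V ::
  "'a set set \<Rightarrow> ('a set \<Rightarrow> 'b topology) \<Rightarrow> ('a set \<Rightarrow> 'a \<Rightarrow> 'b) \<Rightarrow> 'a set \<Rightarrow> ('a + 'a set \<times> 'b) set" where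
  "amg_V \<A> E j U = Inl ` U \<union> (\<Union>A\<in>\<A>. amg_in j A ` Wext (E A) (j A ` A) (j A ` (U \<inter> A)))"

definition Amg ::
  "'a topology \<Rightarrow> 'a set set \<Rightarrow> ('a set \<Rightarrow> 'b topology) \<Rightarrow> ('a set \<Rightarrow> 'a \<Rightarrow> 'b) \<Rightarrow> ('a + 'a set \<times> 'b) topology" where
  "Amg X \<A> E j = topology_generated_by
     ({amg_in j A ` V | A V. A \<in> \<A> \<and> openin (E A) V} \<union>
      {amg_V \<A> E j U | U. openin X U})"

end

theory Submission
  imports Defs
begin


lemma Wext_open: "openin Q (Wext Q P G)"
  unfolding Wext_def by (auto intro: openin_Union)

lemma Wext_sub: "openin Q W \<Longrightarrow> W \<inter> P = G \<Longrightarrow> W \<subseteq> Wext Q P G"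
  unfolding Wext_def by auto

lemma Wext_trace: "openin Q W \<Longrightarrow> W \<inter> P = G \<Longrightarrow> Wext Q P G \<inter> P = G"
  unfolding Wext_def by auto

lemma Wext_trace_sub: "Wext Q P G \<inter> P \<subseteq> G"
  unfolding Wext_def by blast

lemma Wext_closure:
  assumes d: "Q closure_of P = topspace Q" and ex: "openin Q W" "W \<inter> P = G"
    and y: "y \<in> Wext Q P G"
  shows "y \<in> Q closure_of G"
proof -
  have o: "openin Q (Wext Q P G)" by (rule Wext_open)
  have "y \<in> topspace Q" using y o openin_subset by blast
  hence "y \<in> Wext Q P G \<inter> Q closure_of P" using y d by auto
  also have "\<dots> \<subseteq> Q closure_of (Wext Q P G \<inter> P)" by (rule openin_Int_closure_of_subset[OF o])
  also have "Wext Q P G \<inter> P = G" using Wext_trace[OF ex] .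
  finally show ?thesis .
qed

lemma open_dense_empty:
  assumes d: "Q closure_of P = topspace Q" and o: "openin Q W" and e: "W \<inter> P = {}"
  shows "W = {}"
proof -
  have "W \<inter> Q closure_of P \<subseteq> Q closure_of (W \<inter> P)" by (rule openin_Int_closure_of_subset[OF o])
  hence "W \<inter> topspace Q = {}" using d e by auto
  thus ?thesis using openin_subset[OF o] by auto
qed

lemma Wext_empty: "Q closure_of P = topspace Q \<Longrightarrow> Wext Q P {} = {}"
proof -
  assume d: "Q closure_of P = topspace Q"
  have "Wext Q P {} \<inter> P = {}" by (rule Wext_trace[of Q "{}"]) auto
  thus ?thesis by (rule open_dense_empty[OF d Wext_open])
qed

locale amgl =
  fixes X :: "'a topology" and AA :: "'a set set" and E :: "'a set \<Rightarrow> 'b topology"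
    and j :: "'a set \<Rightarrow> 'a \<Rightarrow> 'b"
  assumes sub: "\<And>A. A \<in> AA \<Longrightarrow> A \<subseteq> topspace X"
    and opn: "\<And>A. A \<in> AA \<Longrightarrow> openin X A"
    and emb: "\<And>A. A \<in> AA \<Longrightarrow> embedding_map (subtopology X A) (E A) (j A)"
    and dns: "\<And>A. A \<in> AA \<Longrightarrow> E A closure_of (j A ` A) = topspace (E A)"
begin

abbreviation "T \<equiv> Amg X AA E j"
abbreviation "WA A U \<equiv> Wext (E A) (j A ` A) (j A ` (U \<inter> A))"
abbreviation "VV U \<equiv> amg_V AA E j U"
abbreviation "SS \<equiv> {amg_in j A ` V | A V. A \<in> AA \<and> openin (E A) V} \<union> {amg_V AA E j U | U. openin X U}"

lemma T_eq: "T = topology_generated_by SS" by (simp add: Amg_def)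

lemma tsub: "A \<in> AA \<Longrightarrow> topspace (subtopology X A) = A"
  using sub by auto

lemma injA: "A \<in> AA \<Longrightarrow> inj_on (j A) A"
  using emb[of A] tsub[of A] by (simp add: embedding_map_def homeomorphic_map_def)

lemma contA: "A \<in> AA \<Longrightarrow> continuous_map (subtopology X A) (E A) (j A)"
  using emb[of A] unfolding embedding_map_def
  using homeomorphic_imp_continuous_map continuous_map_in_subtopology by blast

lemma PsubA: "A \<in> AA \<Longrightarrow> j A ` A \<subseteq> topspace (E A)"
  using contA[of A] tsub[of A] by (metis continuous_map_image_subset_topspace)

lemma openA:
  assumes "A \<in> AA" "S \<subseteq> A" "openin (subtopology X A) S"
  shows "openin (subtopology (E A) (j A ` A)) (j A ` S)"
proof -
  have "S \<subseteq> topspace X" using assms sub by blast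
  thus ?thesis using homeomorphic_map_openness[of "subtopology X A" "subtopology (E A) (j A ` A)" "j A" S]
    emb[of A] assms tsub[of A] by (simp add: embedding_map_def)
qed

lemma amg_in_P: "A \<in> AA \<Longrightarrow> a \<in> A \<Longrightarrow> amg_in j A (j A a) = Inl a"
  using injA[of A] by (simp add: amg_in_def)

lemma amg_in_notP: "y \<notin> j A ` A \<Longrightarrow> amg_in j A y = Inr (A,y)"
  by (simp add: amg_in_def)

lemma amg_in_Inl: "amg_in j A y = Inl x \<Longrightarrow> x \<in> A \<and> y = j A x"
proof -
  assume h: "amg_in j A y = Inl x"
  hence y: "y \<in> j A ` A" and x: "x = inv_into A (j A) y" by (auto simp: amg_in_def split: if_splits)
  thus ?thesis by (simp add: inv_into_into f_inv_into_f)
qed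

lemma amg_in_Inr: "amg_in j A y = Inr (B,z) \<Longrightarrow> B = A \<and> z = y \<and> y \<notin> j A ` A"
  by (auto simp: amg_in_def split: if_splits)

lemma amg_in_cases: "(\<And>a. a \<in> A \<Longrightarrow> y = j A a \<Longrightarrow> amg_in j A y = Inl a \<Longrightarrow> R) \<Longrightarrow>
   (y \<notin> j A ` A \<Longrightarrow> amg_in j A y = Inr (A,y) \<Longrightarrow> R) \<Longrightarrow> R"
  by (cases "amg_in j A y") (auto dest: amg_in_Inl amg_in_Inr)

lemma amg_in_inj: "amg_in j A y = amg_in j A y' \<Longrightarrow> y = y'"
proof (cases "amg_in j A y")
  case (Inl a)
  assume "amg_in j A y = amg_in j A y'"
  thus ?thesis using Inl amg_in_Inl[of A y a] amg_in_Inl[of A y' a] by simp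
next
  case (Inr b)
  assume e: "amg_in j A y = amg_in j A y'"
  obtain B z where b: "b = (B,z)" by (cases b)
  have "z = y" using Inr b amg_in_Inr[of A y B z] by simp
  moreover have "z = y'" using Inr b e amg_in_Inr[of A y' B z] by simp
  ultimately show ?thesis by simp
qed

lemma exW: "A \<in> AA \<Longrightarrow> openin X U \<Longrightarrow> \<exists>W. openin (E A) W \<and> W \<inter> j A ` A = j A ` (U \<inter> A)"
proof -
  assume A: "A \<in> AA" and U: "openin X U"
  have "openin (subtopology X A) (U \<inter> A)" using U by (rule openin_subtopology_Int)
  hence "openin (subtopology (E A) (j A ` A)) (j A ` (U \<inter> A))" by (rule openA[OF A Int_lower2])
  then obtain W where "openin (E A) W" "j A ` (U \<inter> A) = W \<inter> j A ` A" unfolding openin_subtopology by blast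
  thus ?thesis by (intro exI[of _ W]) simp
qed

lemma WA_trace: "A \<in> AA \<Longrightarrow> openin X U \<Longrightarrow> WA A U \<inter> j A ` A = j A ` (U \<inter> A)"
proof -
  assume "A \<in> AA" "openin X U"
  then obtain W where "openin (E A) W" "W \<inter> j A ` A = j A ` (U \<inter> A)" using exW by blast
  thus ?thesis by (rule Wext_trace)
qed

lemma WA_cl: "A \<in> AA \<Longrightarrow> openin X U \<Longrightarrow> y \<in> WA A U \<Longrightarrow> y \<in> E A closure_of (j A ` (U \<inter> A))"
proof -
  assume a: "A \<in> AA" "openin X U" "y \<in> WA A U"
  then obtain W where "openin (E A) W" "W \<inter> j A ` A = j A ` (U \<inter> A)" using exW by blast
  thus ?thesis by (intro Wext_closure[OF dns[OF a(1)] _ _ a(3)])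
qed

lemma WA_mono:
  assumes "A \<in> AA" "openin X U'" "U \<subseteq> U'" shows "WA A U \<subseteq> WA A U'"
proof -
  obtain W where W: "openin (E A) W" "W \<inter> j A ` A = j A ` (U' \<inter> A)" using exW[OF assms(1,2)] by blast
  have "j A ` (U \<inter> A) \<subseteq> j A ` (U' \<inter> A)" using assms(3) by (intro image_mono) blast
  hence "Wext (E A) (j A ` A) (j A ` (U \<inter> A)) \<inter> j A ` A \<subseteq> j A ` (U' \<inter> A)"
    by (rule subset_trans[OF Wext_trace_sub])
  hence e: "(WA A U \<union> W) \<inter> j A ` A = j A ` (U' \<inter> A)" using W(2)
    by (simp add: Int_Un_distrib2 Un_absorb1)
  have o: "openin (E A) (WA A U \<union> W)" using W(1) Wext_open by (rule openin_Un[rotated])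
  show ?thesis by (rule subset_trans[OF Un_upper1 Wext_sub[OF o e]])
qed

lemma topT: "topspace T = Inl ` topspace X \<union> (\<Union>A\<in>AA. amg_in j A ` topspace (E A))"
  (is "_ = ?R")
proof -
  have im: "amg_in j A ` Y \<subseteq> ?R" if "A \<in> AA" "Y \<subseteq> topspace (E A)" for A Y
  proof -
    have "amg_in j A ` Y \<subseteq> amg_in j A ` topspace (E A)" using that(2) by (rule image_mono)
    also have "\<dots> \<subseteq> (\<Union>A\<in>AA. amg_in j A ` topspace (E A))" using that(1) by (rule UN_upper)
    finally show ?thesis by (rule subset_trans) (rule Un_upper2)
  qed
  have S1: "s \<subseteq> ?R" if "s \<in> SS" for s
    using that
  proof
    assume "s \<in> {amg_in j A ` V | A V. A \<in> AA \<and> openin (E A) V}"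
    then obtain A V where s: "s = amg_in j A ` V" "A \<in> AA" "openin (E A) V" by blast
    show ?thesis unfolding s(1) by (rule im[OF s(2) openin_subset[OF s(3)]])
  next
    assume "s \<in> {amg_V AA E j U | U. openin X U}"
    then obtain U where U: "openin X U" "s = VV U" by blast
    have "Inl ` U \<subseteq> ?R" using openin_subset[OF U(1)] by blast
    moreover have "(\<Union>A\<in>AA. amg_in j A ` WA A U) \<subseteq> ?R"
      by (rule UN_least) (rule im[OF _ openin_subset[OF Wext_open]])
    ultimately show ?thesis unfolding U(2) amg_V_def by (rule Un_least)
  qed
  have "\<Union>SS \<subseteq> ?R" by (rule Union_least) (rule S1)
  moreover have "Inl ` topspace X \<subseteq> \<Union>SS"
  proof -
    have "VV (topspace X) \<in> SS" by blast
    moreover have "Inl ` topspace X \<subseteq> VV (topspace X)" unfolding amg_V_def by (rule Un_upper1)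
    ultimately show ?thesis by blast
  qed
  moreover have "(\<Union>A\<in>AA. amg_in j A ` topspace (E A)) \<subseteq> \<Union>SS"
  proof (rule UN_least)
    fix A assume "A \<in> AA"
    hence "amg_in j A ` topspace (E A) \<in> SS" by blast
    thus "amg_in j A ` topspace (E A) \<subseteq> \<Union>SS" by (rule Union_upper)
  qed
  ultimately have "\<Union>SS = ?R" by (intro equalityI Un_least)
  thus ?thesis unfolding T_eq topology_generated_by_topspace .
qed

lemma open1: "A \<in> AA \<Longrightarrow> openin (E A) V \<Longrightarrow> openin T (amg_in j A ` V)"
  unfolding T_eq by (rule topology_generated_by_Basis) blast

lemma open2: "openin X U \<Longrightarrow> openin T (VV U)"
  unfolding T_eq by (rule topology_generated_by_Basis) blast

lemma Inl_in_V: "openin X U \<Longrightarrow> Inl x \<in> VV U \<Longrightarrow> x \<in> U"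
proof -
  assume U: "openin X U" and x: "Inl x \<in> VV U"
  show "x \<in> U"
  proof (cases "Inl x \<in> Inl ` U")
    case True thus ?thesis by auto
  next
    case False
    then obtain A w where A: "A \<in> AA" "w \<in> WA A U" "amg_in j A w = Inl x"
      using x unfolding amg_V_def by auto
    hence "x \<in> A" "w = j A x" using amg_in_Inl by auto
    hence "j A x \<in> j A ` (U \<inter> A)" using WA_trace[OF A(1) U] A(2) by blast
    thus ?thesis using injA[OF A(1)] \<open>x \<in> A\<close> by (auto dest: inj_onD)
  qed
qed

lemma Inl_in_V2: "x \<in> U \<Longrightarrow> Inl x \<in> VV U"
  unfolding amg_V_def by auto

lemma Inr_in_V: "Inr (B,w) \<in> VV U \<Longrightarrow> B \<in> AA \<and> w \<in> WA B U \<and> w \<notin> j B ` B"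
proof -
  assume "Inr (B,w) \<in> VV U"
  then obtain A x where "A \<in> AA" "x \<in> WA A U" "amg_in j A x = Inr (B,w)"
    unfolding amg_V_def by auto
  thus ?thesis using amg_in_Inr[of A x B w] by simp
qed

lemma amg_in_in_V: "A \<in> AA \<Longrightarrow> y \<in> WA A U \<Longrightarrow> amg_in j A y \<in> VV U"
  unfolding amg_V_def by auto

lemma V_mono: "openin X U' \<Longrightarrow> U \<subseteq> U' \<Longrightarrow> VV U \<subseteq> VV U'"
proof -
  assume a: "openin X U'" "U \<subseteq> U'"
  show ?thesis unfolding amg_V_def
    by (intro Un_mono image_mono UN_mono order_refl WA_mono a)
qed

lemma N1:
  assumes "generate_topology_on SS N" "A \<in> AA" "Inr (A,y) \<in> N"
  shows "\<exists>W. openin (E A) W \<and> y \<in> W \<and> amg_in j A ` W \<subseteq> N"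
  using assms(1,3)
proof induction
  case Empty thus ?case by simp
next
  case (Int a b)
  then obtain W1 W2 where "openin (E A) W1 \<and> y \<in> W1 \<and> amg_in j A ` W1 \<subseteq> a"
    "openin (E A) W2 \<and> y \<in> W2 \<and> amg_in j A ` W2 \<subseteq> b" by auto
  thus ?case by (intro exI[of _ "W1 \<inter> W2"]) auto
next
  case (UN K)
  then obtain k where "k \<in> K" "Inr (A,y) \<in> k" by auto
  with UN obtain W where "openin (E A) W \<and> y \<in> W \<and> amg_in j A ` W \<subseteq> k" by blast
  thus ?case using \<open>k \<in> K\<close> by blast
next
  case (Basis s)
  from Basis(1) show ?case
  proof
    assume "s \<in> {amg_in j A ` V | A V. A \<in> AA \<and> openin (E A) V}"
    then obtain A' V where s: "s = amg_in j A' ` V" "openin (E A') V" by blast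
    then obtain v where "v \<in> V" "amg_in j A' v = Inr (A,y)" using Basis(2) by auto
    hence "A' = A" "v = y" using amg_in_Inr[of A' v A y] by simp_all
    show ?thesis
    proof (intro exI[of _ V] conjI)
      show "openin (E A) V" using s(2) \<open>A' = A\<close> by simp
      show "y \<in> V" using \<open>v \<in> V\<close> \<open>v = y\<close> by simp
      show "amg_in j A ` V \<subseteq> s" using s(1) \<open>A' = A\<close> by simp
    qed
  next
    assume "s \<in> {amg_V AA E j U | U. openin X U}"
    then obtain U where s: "s = VV U" "openin X U" by blast
    have "y \<in> WA A U" using Inr_in_V[of A y U] Basis(2) s(1) by simp
    show ?thesis
    proof (intro exI[of _ "WA A U"] conjI)
      show "openin (E A) (WA A U)" by (rule Wext_open)
      show "y \<in> WA A U" by fact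
      show "amg_in j A ` WA A U \<subseteq> s" using s(1) amg_in_in_V[OF assms(2)] by auto
    qed
  qed
qed

lemma N2:
  assumes "generate_topology_on SS N" "x \<notin> \<Union>AA" "Inl x \<in> N"
  shows "\<exists>U. openin X U \<and> x \<in> U \<and> VV U \<subseteq> N"
  using assms(1,3)
proof induction
  case Empty thus ?case by simp
next
  case (Int a b)
  then obtain U1 U2 where "openin X U1 \<and> x \<in> U1 \<and> VV U1 \<subseteq> a"
    "openin X U2 \<and> x \<in> U2 \<and> VV U2 \<subseteq> b" by auto
  moreover have "VV (U1 \<inter> U2) \<subseteq> VV U1" by (rule V_mono) (use calculation in auto)
  moreover have "VV (U1 \<inter> U2) \<subseteq> VV U2" by (rule V_mono) (use calculation in auto)
  ultimately show ?case by (intro exI[of _ "U1 \<inter> U2"]) auto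
next
  case (UN K)
  then obtain k where "k \<in> K" "Inl x \<in> k" by auto
  with UN obtain U where "openin X U \<and> x \<in> U \<and> VV U \<subseteq> k" by blast
  thus ?case using \<open>k \<in> K\<close> by blast
next
  case (Basis s)
  from Basis(1) show ?case
  proof
    assume "s \<in> {amg_in j A ` V | A V. A \<in> AA \<and> openin (E A) V}"
    then obtain A' V where s: "s = amg_in j A' ` V" "A' \<in> AA" by blast
    then obtain v where "amg_in j A' v = Inl x" using Basis(2) by auto
    hence "x \<in> A'" using amg_in_Inl by simp
    hence False using s(2) assms(2) by simp
    thus ?thesis ..
  next
    assume "s \<in> {amg_V AA E j U | U. openin X U}"
    then obtain U where s: "s = VV U" "openin X U" by blast
    have "x \<in> U" using Inl_in_V[OF s(2)] Basis(2) s(1) by simp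
    show ?thesis by (rule exI[of _ U]) (simp add: s \<open>x \<in> U\<close>)
  qed
qed

end


lemma reg_nbhd:
  assumes "regular_space Z" "openin Z Ob" "z \<in> Ob"
  shows "\<exists>Oc. openin Z Oc \<and> z \<in> Oc \<and> Z closure_of Oc \<subseteq> Ob"
proof -
  have c: "closedin Z (topspace Z - Ob)" using assms(2) by (rule closedin_diff[OF closedin_topspace])
  have "z \<in> topspace Z - (topspace Z - Ob)" using assms(3) openin_subset[OF assms(2)] by blast
  then obtain U where U: "openin Z U" "z \<in> U" "disjnt (topspace Z - Ob) (Z closure_of U)"
    using assms(1) c unfolding regular_space by blast
  have "Z closure_of U \<subseteq> Ob" using U(3) closure_of_subset_topspace[of Z U] unfolding disjnt_def by blast
  thus ?thesis using U by blast
qed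

context amgl begin

lemma gen_open: "openin T N \<Longrightarrow> generate_topology_on SS N"
  unfolding T_eq by (rule openin_topology_generated_by)

lemma Inl_cont: "continuous_map X T Inl"
  unfolding T_eq
proof (rule continuous_on_generated_topo)
  fix s assume "s \<in> SS"
  thus "openin X (Inl -` s \<inter> topspace X)"
  proof
    assume "s \<in> {amg_in j A ` V | A V. A \<in> AA \<and> openin (E A) V}"
    then obtain A V where s: "s = amg_in j A ` V" "A \<in> AA" "openin (E A) V" by blast
    have eq: "Inl -` s \<inter> topspace X = {x \<in> topspace (subtopology X A). j A x \<in> V}"
    proof (intro equalityI subsetI)
      fix x assume "x \<in> Inl -` s \<inter> topspace X"
      then obtain v where "v \<in> V" "amg_in j A v = Inl x" using s(1) by auto
      hence "x \<in> A" "v = j A x" using amg_in_Inl by simp_all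
      thus "x \<in> {x \<in> topspace (subtopology X A). j A x \<in> V}" using tsub[OF s(2)] \<open>v \<in> V\<close> by simp
    next
      fix x assume "x \<in> {x \<in> topspace (subtopology X A). j A x \<in> V}"
      hence x: "x \<in> A" "j A x \<in> V" using tsub[OF s(2)] by simp_all
      hence "Inl x \<in> s" using s(1) amg_in_P[OF s(2) x(1)] by (metis image_eqI)
      thus "x \<in> Inl -` s \<inter> topspace X" using x(1) sub[OF s(2)] by auto
    qed
    have "openin (subtopology X A) {x \<in> topspace (subtopology X A). j A x \<in> V}"
      by (rule openin_continuous_map_preimage[OF contA[OF s(2)] s(3)])
    hence "openin X {x \<in> topspace (subtopology X A). j A x \<in> V}"
      using openin_open_subtopology[OF opn[OF s(2)]] by blast
    thus ?thesis using eq by simp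
  next
    assume "s \<in> {amg_V AA E j U | U. openin X U}"
    then obtain U where s: "s = VV U" "openin X U" by blast
    have "Inl -` s \<inter> topspace X = U"
    proof (intro equalityI subsetI)
      fix x assume "x \<in> Inl -` s \<inter> topspace X"
      thus "x \<in> U" using Inl_in_V[OF s(2)] s(1) by simp
    next
      fix x assume "x \<in> U"
      thus "x \<in> Inl -` s \<inter> topspace X" using Inl_in_V2[of x U] s openin_subset[OF s(2)] by auto
    qed
    thus ?thesis using s(2) by simp
  qed
next
  have "Inl ` topspace X \<subseteq> VV (topspace X)" unfolding amg_V_def by (rule Un_upper1)
  moreover have "VV (topspace X) \<in> SS" by blast
  ultimately show "Inl ` topspace X \<subseteq> \<Union>SS" by blast
qed

lemma Inl_top: "Inl ` topspace X \<subseteq> topspace T"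
  using topT by blast

lemma amg_in_top: "A \<in> AA \<Longrightarrow> y \<in> topspace (E A) \<Longrightarrow> amg_in j A y \<in> topspace T"
  using topT by blast

lemma Inl_emb: "embedding_map X T Inl"
  unfolding embedding_map_def
proof (rule bijective_open_imp_homeomorphic_map)
  show "continuous_map X (subtopology T (Inl ` topspace X)) Inl"
    using Inl_cont by (simp add: continuous_map_in_subtopology)
  show "open_map X (subtopology T (Inl ` topspace X)) Inl"
    unfolding open_map_def
  proof (intro allI impI)
    fix U assume U: "openin X U"
    have "Inl ` U = VV U \<inter> Inl ` topspace X"
    proof (intro equalityI subsetI)
      fix p :: "'a + 'a set \<times> 'b" assume "p \<in> Inl ` U"
      then obtain x where "x \<in> U" "p = Inl x" by blast
      thus "p \<in> VV U \<inter> Inl ` topspace X" using Inl_in_V2 openin_subset[OF U] by blast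
    next
      fix p :: "'a + 'a set \<times> 'b" assume "p \<in> VV U \<inter> Inl ` topspace X"
      then obtain x where "p = Inl x" "Inl x \<in> VV U" by blast
      thus "p \<in> Inl ` U" using Inl_in_V[OF U] by blast
    qed
    thus "openin (subtopology T (Inl ` topspace X)) (Inl ` U)"
      using openin_subtopology_Int[OF open2[OF U]] by simp
  qed
  show "Inl ` topspace X = topspace (subtopology T (Inl ` topspace X))"
    using Inl_top by auto
  show "inj_on Inl (topspace X)" by simp
qed

lemma cont_iff:
  assumes Z: "regular_space Z"
  shows "continuous_map T Z f \<longleftrightarrow> continuous_map X Z (\<lambda>x. f (Inl x)) \<and>
           (\<forall>A\<in>AA. continuous_map (E A) Z (\<lambda>y. f (amg_in j A y)))"
proof
  assume f: "continuous_map T Z f"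
  have fX: "continuous_map X Z (\<lambda>x. f (Inl x))"
    using continuous_map_compose[OF Inl_cont f] by (simp add: o_def)
  have fT: "f p \<in> topspace Z" if "p \<in> topspace T" for p
    using f that continuous_map_image_subset_topspace by blast
  have nb: "\<exists>W. openin (E A) W \<and> y \<in> W \<and> amg_in j A ` W \<subseteq> {p \<in> topspace T. f p \<in> Ob}"
    if "A \<in> AA" "openin Z Ob" "f (Inr (A,y)) \<in> Ob" "y \<in> topspace (E A)" "y \<notin> j A ` A" for A Ob y
  proof -
    have "Inr (A,y) \<in> topspace T" using amg_in_top[OF that(1,4)] amg_in_notP[OF that(5)] by simp
    hence "Inr (A,y) \<in> {p \<in> topspace T. f p \<in> Ob}" using that(3) by simp
    moreover have "generate_topology_on SS {p \<in> topspace T. f p \<in> Ob}"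
      by (rule gen_open, rule openin_continuous_map_preimage[OF f that(2)])
    ultimately show ?thesis using N1 that(1) by blast
  qed
  show "continuous_map X Z (\<lambda>x. f (Inl x)) \<and> (\<forall>A\<in>AA. continuous_map (E A) Z (\<lambda>y. f (amg_in j A y)))"
  proof (intro conjI ballI fX)
    fix A assume A: "A \<in> AA"
    show "continuous_map (E A) Z (\<lambda>y. f (amg_in j A y))"
      unfolding continuous_map
    proof (intro conjI allI impI)
      show "(\<lambda>y. f (amg_in j A y)) ` topspace (E A) \<subseteq> topspace Z"
        using fT amg_in_top[OF A] by blast
      fix Ob assume Ob: "openin Z Ob"
      show "openin (E A) {y \<in> topspace (E A). f (amg_in j A y) \<in> Ob}"
        unfolding openin_subopen[of _ "{y \<in> topspace (E A). f (amg_in j A y) \<in> Ob}"]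
      proof
        fix y assume y: "y \<in> {y \<in> topspace (E A). f (amg_in j A y) \<in> Ob}"
        show "\<exists>W. openin (E A) W \<and> y \<in> W \<and> W \<subseteq> {y \<in> topspace (E A). f (amg_in j A y) \<in> Ob}"
        proof (cases "y \<in> j A ` A")
          case False
          have fy: "f (Inr (A,y)) \<in> Ob" using y amg_in_notP[OF False] by simp
          have yt: "y \<in> topspace (E A)" using y by simp
          obtain W where W: "openin (E A) W" "y \<in> W" "amg_in j A ` W \<subseteq> {p \<in> topspace T. f p \<in> Ob}"
            using nb[OF A Ob fy yt False] by blast
          have "W \<subseteq> {y \<in> topspace (E A). f (amg_in j A y) \<in> Ob}"
            using W(3) openin_subset[OF W(1)] by blast
          thus ?thesis using W by blast
        next
          case True
          then obtain a where a: "a \<in> A" "y = j A a" by blast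
          have ga: "f (Inl a) \<in> Ob" using y a amg_in_P[OF A a(1)] by simp
          obtain Oc where Oc: "openin Z Oc" "f (Inl a) \<in> Oc" "Z closure_of Oc \<subseteq> Ob"
            using reg_nbhd[OF Z Ob ga] by blast
          define U where "U = {x \<in> topspace X. f (Inl x) \<in> Oc}"
          have U: "openin X U" unfolding U_def by (rule openin_continuous_map_preimage[OF fX Oc(1)])
          have OcOb: "Oc \<subseteq> Ob" using closure_of_subset[OF openin_subset[OF Oc(1)]] Oc(3) by blast
          have "a \<in> U" unfolding U_def using a(1) sub[OF A] Oc(2) by blast
          hence "j A a \<in> j A ` (U \<inter> A)" using a(1) by (intro imageI) simp
          hence "y \<in> WA A U \<inter> j A ` A" using WA_trace[OF A U] a(2) by simp
          hence "y \<in> WA A U" by simp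
          moreover have "WA A U \<subseteq> {y \<in> topspace (E A). f (amg_in j A y) \<in> Ob}"
          proof
            fix w assume w: "w \<in> WA A U"
            have wt: "w \<in> topspace (E A)" using w openin_subset[OF Wext_open[of "E A"]] by blast
            show "w \<in> {y \<in> topspace (E A). f (amg_in j A y) \<in> Ob}"
            proof (cases "w \<in> j A ` A")
              case True
              have "w \<in> WA A U \<inter> j A ` A" using w True by (rule IntI)
              hence "w \<in> j A ` (U \<inter> A)" using WA_trace[OF A U] by simp
              then obtain b where b: "b \<in> U" "b \<in> A" "w = j A b" by blast
              hence "f (amg_in j A w) \<in> Oc" using amg_in_P[OF A b(2)] U_def by simp
              thus ?thesis using wt OcOb by blast
            next
              case False
              have wc: "w \<in> E A closure_of (j A ` (U \<inter> A))" by (rule WA_cl[OF A U w])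
              have "f (Inr (A,w)) \<in> Z closure_of Oc"
                unfolding in_closure_of
              proof (intro conjI allI impI)
                show "f (Inr (A, w)) \<in> topspace Z"
                  using fT amg_in_top[OF A wt] amg_in_notP[OF False] by simp
                fix T' assume T': "f (Inr (A, w)) \<in> T' \<and> openin Z T'"
                then obtain W' where W': "openin (E A) W'" "w \<in> W'" "amg_in j A ` W' \<subseteq> {p \<in> topspace T. f p \<in> T'}"
                  using nb[OF A _ _ wt False] by blast
                have "\<exists>z. z \<in> j A ` (U \<inter> A) \<and> z \<in> W'"
                  using wc W'(1,2) unfolding in_closure_of by simp
                then obtain z where z: "z \<in> j A ` (U \<inter> A)" "z \<in> W'" by blast
                then obtain b where b: "b \<in> U" "b \<in> A" "z = j A b" by blast
                have "amg_in j A z \<in> {p \<in> topspace T. f p \<in> T'}" using W'(3) z(2) by blast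
                hence "f (Inl b) \<in> T'" using amg_in_P[OF A b(2)] b(3) by simp
                moreover have "f (Inl b) \<in> Oc" using b(1) U_def by simp
                ultimately show "\<exists>y. y \<in> Oc \<and> y \<in> T'" by blast
              qed
              thus ?thesis using wt Oc(3) amg_in_notP[OF False] by auto
            qed
          qed
          ultimately show ?thesis by (intro exI[of _ "WA A U"] conjI Wext_open)
        qed
      qed
    qed
  qed
next
  assume "continuous_map X Z (\<lambda>x. f (Inl x)) \<and> (\<forall>A\<in>AA. continuous_map (E A) Z (\<lambda>y. f (amg_in j A y)))"
  hence fX: "continuous_map X Z (\<lambda>x. f (Inl x))"
    and fA: "\<And>A. A \<in> AA \<Longrightarrow> continuous_map (E A) Z (\<lambda>y. f (amg_in j A y))" by auto
  have fXt: "f (Inl x) \<in> topspace Z" if "x \<in> topspace X" for x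
    using continuous_map_image_subset_topspace[OF fX] that by blast
  have fAt: "f (amg_in j A y) \<in> topspace Z" if "A \<in> AA" "y \<in> topspace (E A)" for A y
    using continuous_map_image_subset_topspace[OF fA[OF that(1)]] that(2) by blast
  show "continuous_map T Z f"
    unfolding continuous_map
  proof (intro conjI allI impI)
    show "f ` topspace T \<subseteq> topspace Z"
    proof
      fix z assume "z \<in> f ` topspace T"
      then obtain p where p: "p \<in> topspace T" "z = f p" by blast
      from p(1)[unfolded topT] show "z \<in> topspace Z"
      proof
        assume "p \<in> Inl ` topspace X" thus ?thesis using fXt p(2) by blast
      next
        assume "p \<in> (\<Union>A\<in>AA. amg_in j A ` topspace (E A))"
        thus ?thesis using fAt p(2) by blast
      qed
    qed
    fix Ob assume Ob: "openin Z Ob"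
    let ?N = "{p \<in> topspace T. f p \<in> Ob}"
    have inl: "\<exists>N. openin T N \<and> Inl x \<in> N \<and> N \<subseteq> ?N" if x: "x \<in> topspace X" "f (Inl x) \<in> Ob" for x
    proof -
      obtain Oc where Oc: "openin Z Oc" "f (Inl x) \<in> Oc" "Z closure_of Oc \<subseteq> Ob"
        using reg_nbhd[OF Z Ob x(2)] by blast
      have OcOb: "Oc \<subseteq> Ob" using closure_of_subset[OF openin_subset[OF Oc(1)]] Oc(3) by blast
      define U where "U = {x \<in> topspace X. f (Inl x) \<in> Oc}"
      have U: "openin X U" unfolding U_def by (rule openin_continuous_map_preimage[OF fX Oc(1)])
      have "x \<in> U" unfolding U_def using x Oc(2) by blast
      have "VV U \<subseteq> ?N"
      proof
        fix q assume q: "q \<in> VV U"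
        have qt: "q \<in> topspace T" using q openin_subset[OF open2[OF U]] by blast
        have "f q \<in> Ob"
        proof (cases "q \<in> Inl ` U")
          case True thus ?thesis using U_def OcOb by auto
        next
          case False
          then obtain B w where B: "B \<in> AA" "w \<in> WA B U" "q = amg_in j B w"
            using q unfolding amg_V_def by blast
          show ?thesis
          proof (cases "w \<in> j B ` B")
            case True
            have "w \<in> WA B U \<inter> j B ` B" using B(2) True by (rule IntI)
            hence "w \<in> j B ` (U \<inter> B)" using WA_trace[OF B(1) U] by simp
            then obtain b where b: "b \<in> U" "b \<in> B" "w = j B b" by blast
            thus ?thesis using amg_in_P[OF B(1) b(2)] B(3) U_def OcOb by auto
          next
            case False
            have wc: "w \<in> E B closure_of (j B ` (U \<inter> B))" by (rule WA_cl[OF B(1) U B(2)])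
            let ?g = "\<lambda>y. f (amg_in j B y)"
            have "?g w \<in> ?g ` (E B closure_of (j B ` (U \<inter> B)))" using wc by (rule imageI)
            also have "\<dots> \<subseteq> Z closure_of (?g ` (j B ` (U \<inter> B)))"
              by (rule continuous_map_image_closure_subset[OF fA[OF B(1)]])
            also have "\<dots> \<subseteq> Z closure_of Oc"
            proof (rule closure_of_mono, rule subsetI)
              fix z assume "z \<in> ?g ` (j B ` (U \<inter> B))"
              then obtain b where b: "b \<in> U" "b \<in> B" "z = ?g (j B b)" by blast
              thus "z \<in> Oc" using amg_in_P[OF B(1) b(2)] U_def by simp
            qed
            finally show ?thesis using Oc(3) B(3) by blast
          qed
        qed
        thus "q \<in> ?N" using qt by blast
      qed
      thus ?thesis using open2[OF U] Inl_in_V2[OF \<open>x \<in> U\<close>] by blast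
    qed
    show "openin T ?N"
      unfolding openin_subopen[of _ ?N]
    proof
      fix p assume p: "p \<in> ?N"
      hence pt: "p \<in> topspace T" and pO: "f p \<in> Ob" by auto
      from pt[unfolded topT] show "\<exists>N. openin T N \<and> p \<in> N \<and> N \<subseteq> ?N"
      proof
        assume "p \<in> Inl ` topspace X"
        then obtain x where "x \<in> topspace X" "p = Inl x" by blast
        thus ?thesis using inl pO by blast
      next
        assume "p \<in> (\<Union>A\<in>AA. amg_in j A ` topspace (E A))"
        then obtain A y where Ay: "A \<in> AA" "y \<in> topspace (E A)" "p = amg_in j A y" by blast
        show ?thesis
        proof (cases "y \<in> j A ` A")
          case True
          then obtain a where a: "a \<in> A" "y = j A a" by blast
          hence "p = Inl a" using amg_in_P[OF Ay(1) a(1)] Ay(3) by simp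
          thus ?thesis using inl[of a] pO a(1) sub[OF Ay(1)] by blast
        next
          case False
          define W where "W = {y \<in> topspace (E A). f (amg_in j A y) \<in> Ob}"
          have W: "openin (E A) W" unfolding W_def by (rule openin_continuous_map_preimage[OF fA[OF Ay(1)] Ob])
          have "amg_in j A ` W \<subseteq> ?N" unfolding W_def using amg_in_top[OF Ay(1)] by blast
          moreover have "p \<in> amg_in j A ` W" unfolding W_def using Ay pO by blast
          ultimately show ?thesis using open1[OF Ay(1) W] by blast
        qed
      qed
    qed
  qed
qed

end


locale amgc = amgl +
  assumes H: "\<And>A. A \<in> AA \<Longrightarrow> Hausdorff_space (E A)"
    and CI: "\<And>A A'. A \<in> AA \<Longrightarrow> A' \<in> AA \<Longrightarrow> A \<noteq> A' \<Longrightarrow> compactin X (A \<inter> A')"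
begin

lemma LC: "A \<in> AA \<Longrightarrow> A' \<in> AA \<Longrightarrow> A \<noteq> A' \<Longrightarrow> closedin (E A) (j A ` (A \<inter> A'))"
proof -
  assume a: "A \<in> AA" "A' \<in> AA" "A \<noteq> A'"
  have "compactin (subtopology X A) (A \<inter> A')"
    using CI[OF a] by (simp add: compactin_subtopology)
  hence "compactin (E A) (j A ` (A \<inter> A'))" by (rule image_compactin[OF _ contA[OF a(1)]])
  thus ?thesis by (rule compactin_imp_closedin[OF H[OF a(1)]])
qed

lemma amg_in_cont: assumes A: "A \<in> AA" shows "continuous_map (E A) T (amg_in j A)"
  unfolding T_eq
proof (rule continuous_on_generated_topo)
  fix s assume "s \<in> SS"
  thus "openin (E A) (amg_in j A -` s \<inter> topspace (E A))"
  proof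
    assume "s \<in> {amg_in j A ` V | A V. A \<in> AA \<and> openin (E A) V}"
    then obtain B V where s: "s = amg_in j B ` V" "B \<in> AA" "openin (E B) V" by blast
    show ?thesis
    proof (cases "B = A")
      case True
      have "amg_in j A -` s \<inter> topspace (E A) = V"
      proof (intro equalityI subsetI)
        fix y assume "y \<in> amg_in j A -` s \<inter> topspace (E A)"
        then obtain v where "v \<in> V" "amg_in j A y = amg_in j A v" using s(1) True by auto
        thus "y \<in> V" using amg_in_inj by metis
      next
        fix y assume "y \<in> V"
        thus "y \<in> amg_in j A -` s \<inter> topspace (E A)" using s True openin_subset[OF s(3)] by auto
      qed
      thus ?thesis using s(3) True by simp
    next
      case False
      define Ss where "Ss = {a \<in> A. a \<in> B \<and> j B a \<in> V}"
      have eq: "amg_in j A -` s \<inter> topspace (E A) = j A ` Ss"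
      proof (intro equalityI subsetI)
        fix y assume y: "y \<in> amg_in j A -` s \<inter> topspace (E A)"
        then obtain v where v: "v \<in> V" "amg_in j A y = amg_in j B v" using s(1) by auto
        show "y \<in> j A ` Ss"
        proof (rule amg_in_cases[of A y])
          fix a assume a: "a \<in> A" "y = j A a" "amg_in j A y = Inl a"
          hence "a \<in> B \<and> v = j B a" using v(2) amg_in_Inl[of B v a] by simp
          hence "a \<in> Ss" using a v(1) Ss_def by simp
          thus ?thesis using a(2) by simp
        next
          assume "y \<notin> j A ` A" "amg_in j A y = Inr (A, y)"
          hence "A = B" using v(2) amg_in_Inr[of B v A y] by simp
          thus ?thesis using False by simp
        qed
      next
        fix y assume "y \<in> j A ` Ss"
        then obtain a where a: "a \<in> A" "a \<in> B" "j B a \<in> V" "y = j A a" unfolding Ss_def by blast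
        have "amg_in j A y = amg_in j B (j B a)" using amg_in_P[OF A a(1)] amg_in_P[OF s(2) a(2)] a(4) by simp
        hence "amg_in j A y \<in> s" using s(1) a(3) by simp
        moreover have "y \<in> topspace (E A)" using PsubA[OF A] a by blast
        ultimately show "y \<in> amg_in j A -` s \<inter> topspace (E A)" by simp
      qed
      have SsA: "Ss \<subseteq> A" unfolding Ss_def by blast
      have "openin (subtopology X B) {x \<in> topspace (subtopology X B). j B x \<in> V}"
        by (rule openin_continuous_map_preimage[OF contA[OF s(2)] s(3)])
      hence "openin X {x \<in> topspace (subtopology X B). j B x \<in> V}"
        using openin_open_subtopology[OF opn[OF s(2)]] by blast
      hence "openin X ({x \<in> topspace (subtopology X B). j B x \<in> V} \<inter> A)"
        using opn[OF A] by (rule openin_Int)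
      moreover have "{x \<in> topspace (subtopology X B). j B x \<in> V} \<inter> A = Ss"
        unfolding Ss_def using tsub[OF s(2)] by auto
      ultimately have "openin X Ss" by simp
      hence "openin (subtopology X A) Ss" using openin_open_subtopology[OF opn[OF A]] SsA by blast
      hence "openin (subtopology (E A) (j A ` A)) (j A ` Ss)" by (rule openA[OF A SsA])
      then obtain G where G: "openin (E A) G" "j A ` Ss = G \<inter> j A ` A"
        unfolding openin_subtopology by blast
      have "G \<subseteq> j A ` Ss"
      proof
        fix g assume g: "g \<in> G"
        have "g \<in> G \<inter> E A closure_of (j A ` A)" using g openin_subset[OF G(1)] dns[OF A] by blast
        also have "\<dots> \<subseteq> E A closure_of (G \<inter> j A ` A)" by (rule openin_Int_closure_of_subset[OF G(1)])
        also have "\<dots> \<subseteq> E A closure_of (j A ` (A \<inter> B))"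
        proof (rule closure_of_mono)
          have "Ss \<subseteq> A \<inter> B" unfolding Ss_def by blast
          hence "j A ` Ss \<subseteq> j A ` (A \<inter> B)" by (rule image_mono)
          thus "G \<inter> j A ` A \<subseteq> j A ` (A \<inter> B)" using G(2) by simp
        qed
        also have "\<dots> = j A ` (A \<inter> B)"
          using LC[OF A s(2)] False by (simp add: closure_of_eq)
        finally have "g \<in> j A ` A" by blast
        hence "g \<in> G \<inter> j A ` A" using g by simp
        thus "g \<in> j A ` Ss" using G(2) by simp
      qed
      hence "j A ` Ss = G" using G(2) by blast
      thus ?thesis using eq G(1) by simp
    qed
  next
    assume "s \<in> {amg_V AA E j U | U. openin X U}"
    then obtain U where s: "s = VV U" "openin X U" by blast
    have "amg_in j A -` s \<inter> topspace (E A) = WA A U"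
    proof (intro equalityI subsetI)
      fix y assume y: "y \<in> amg_in j A -` s \<inter> topspace (E A)"
      show "y \<in> WA A U"
      proof (rule amg_in_cases[of A y])
        fix a assume a: "a \<in> A" "y = j A a" "amg_in j A y = Inl a"
        hence "a \<in> U" using y s Inl_in_V[OF s(2), of a] by simp
        hence "y \<in> j A ` (U \<inter> A)" using a by simp
        hence "y \<in> WA A U \<inter> j A ` A" using WA_trace[OF A s(2)] by simp
        thus ?thesis by simp
      next
        assume "y \<notin> j A ` A" "amg_in j A y = Inr (A, y)"
        thus ?thesis using y s Inr_in_V[of A y U] by simp
      qed
    next
      fix y assume y: "y \<in> WA A U"
      have "y \<in> topspace (E A)" using y openin_subset[OF Wext_open[of "E A"]] by blast
      thus "y \<in> amg_in j A -` s \<inter> topspace (E A)" using amg_in_in_V[OF A y] s(1) by simp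
    qed
    thus ?thesis by (simp add: Wext_open)
  qed
next
  have "amg_in j A ` topspace (E A) \<in> SS" using A by blast
  thus "amg_in j A ` topspace (E A) \<subseteq> \<Union>SS" by (rule Union_upper)
qed

lemma dense_T: "T closure_of (Inl ` topspace X) = topspace T"
proof (rule equalityI[OF closure_of_subset_topspace subsetI])
  fix p assume p: "p \<in> topspace T"
  from p[unfolded topT] show "p \<in> T closure_of (Inl ` topspace X)"
  proof
    assume "p \<in> Inl ` topspace X"
    thus ?thesis using closure_of_subset[OF Inl_top] by blast
  next
    assume "p \<in> (\<Union>A\<in>AA. amg_in j A ` topspace (E A))"
    then obtain A y where Ay: "A \<in> AA" "y \<in> topspace (E A)" "p = amg_in j A y" by blast
    have "p \<in> amg_in j A ` (E A closure_of (j A ` A))" using Ay dns[OF Ay(1)] by simp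
    also have "\<dots> \<subseteq> T closure_of (amg_in j A ` (j A ` A))"
      by (rule continuous_map_image_closure_subset[OF amg_in_cont[OF Ay(1)]])
    also have "\<dots> \<subseteq> T closure_of (Inl ` topspace X)"
    proof (rule closure_of_mono, rule subsetI)
      fix q assume "q \<in> amg_in j A ` (j A ` A)"
      then obtain a where "a \<in> A" "q = amg_in j A (j A a)" by blast
      thus "q \<in> Inl ` topspace X" using amg_in_P[OF Ay(1)] sub[OF Ay(1)] by auto
    qed
    finally show ?thesis .
  qed
qed

lemma pt_cases:
  assumes "p \<in> topspace T"
  obtains x where "x \<in> topspace X" "p = Inl x"
  | A y where "A \<in> AA" "y \<in> topspace (E A)" "y \<notin> j A ` A" "p = Inr (A,y)"
proof -
  from assms[unfolded topT] show ?thesis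
  proof
    assume "p \<in> Inl ` topspace X" thus ?thesis using that(1) by blast
  next
    assume "p \<in> (\<Union>A\<in>AA. amg_in j A ` topspace (E A))"
    then obtain A y where Ay: "A \<in> AA" "y \<in> topspace (E A)" "p = amg_in j A y" by blast
    show ?thesis
    proof (cases "y \<in> j A ` A")
      case True
      then obtain a where "a \<in> A" "y = j A a" by blast
      thus ?thesis using that(1)[of a] amg_in_P[OF Ay(1)] Ay sub[OF Ay(1)] by auto
    next
      case False thus ?thesis using that(2)[OF Ay(1,2) False] Ay(3) amg_in_notP[OF False] by simp
    qed
  qed
qed

lemma disj_img: "disjnt V1 V2 \<Longrightarrow> disjnt (amg_in j A ` V1) (amg_in j A ` V2)"
  unfolding disjnt_def using amg_in_inj by blast

lemma sep_same:
  assumes A: "A \<in> AA" and y: "y \<in> topspace (E A)" "y' \<in> topspace (E A)" "y \<noteq> y'"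
  shows "\<exists>U V. openin T U \<and> openin T V \<and> amg_in j A y \<in> U \<and> amg_in j A y' \<in> V \<and> disjnt U V"
proof -
  obtain V1 V2 where V: "openin (E A) V1" "openin (E A) V2" "y \<in> V1" "y' \<in> V2" "disjnt V1 V2"
    using H[OF A] y unfolding Hausdorff_space_def by blast
  show ?thesis
    by (intro exI[of _ "amg_in j A ` V1"] exI[of _ "amg_in j A ` V2"] conjI open1[OF A] V(1,2)
          imageI V(3,4) disj_img V(5))
qed

lemma sep_ll:
  assumes HX: "Hausdorff_space X" and x: "x \<in> topspace X" "x' \<in> topspace X" "x \<noteq> x'"
  shows "\<exists>U V. openin T U \<and> openin T V \<and> Inl x \<in> U \<and> Inl x' \<in> V \<and> disjnt U V"
proof -
  obtain U U' where U: "openin X U" "openin X U'" "x \<in> U" "x' \<in> U'" "disjnt U U'"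
    using HX x unfolding Hausdorff_space_def by blast
  have "disjnt (VV U) (VV U')"
    unfolding disjnt_def
  proof (rule ccontr)
    assume "VV U \<inter> VV U' \<noteq> {}"
    then obtain q where q: "q \<in> VV U" "q \<in> VV U'" by blast
    show False
    proof (cases q)
      case (Inl z)
      thus False using q Inl_in_V[OF U(1)] Inl_in_V[OF U(2)] U(5) unfolding disjnt_def by blast
    next
      case (Inr r)
      then obtain B w where r: "q = Inr (B,w)" by (cases r) auto
      hence B: "B \<in> AA" "w \<in> WA B U" "w \<in> WA B U'" using q Inr_in_V by auto
      have o: "openin (E B) (WA B U \<inter> WA B U')" by (intro openin_Int Wext_open)
      have "(WA B U \<inter> WA B U') \<inter> j B ` B = {}"
      proof (rule ccontr)
        assume "(WA B U \<inter> WA B U') \<inter> j B ` B \<noteq> {}"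
        then obtain z where "z \<in> WA B U \<inter> j B ` B" "z \<in> WA B U' \<inter> j B ` B" by blast
        hence "z \<in> j B ` (U \<inter> B)" "z \<in> j B ` (U' \<inter> B)" using WA_trace[OF B(1) U(1)] WA_trace[OF B(1) U(2)] by simp_all
        then obtain b b' where "b \<in> U \<inter> B" "b' \<in> U' \<inter> B" "j B b = j B b'" by (metis imageE)
        thus False using injA[OF B(1)] U(5) unfolding disjnt_def by (auto dest: inj_onD)
      qed
      hence "WA B U \<inter> WA B U' = {}" by (rule open_dense_empty[OF dns[OF B(1)] o])
      thus False using B by blast
    qed
  qed
  thus ?thesis by (intro exI[of _ "VV U"] exI[of _ "VV U'"] conjI open2 U(1,2) Inl_in_V2 U(3,4))
qed

lemma sep_lr:
  assumes cl: "\<And>A. A \<in> AA \<Longrightarrow> closedin X A"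
    and x: "x \<in> topspace X" and A: "A \<in> AA" and y: "y \<in> topspace (E A)" "y \<notin> j A ` A"
  shows "\<exists>U V. openin T U \<and> openin T V \<and> Inl x \<in> U \<and> Inr (A,y) \<in> V \<and> disjnt U V"
proof (cases "x \<in> A")
  case True
  have "j A x \<in> topspace (E A)" using PsubA[OF A] True by blast
  moreover have "j A x \<noteq> y" using y(2) True by blast
  ultimately obtain U V where "openin T U" "openin T V" "amg_in j A (j A x) \<in> U" "amg_in j A y \<in> V" "disjnt U V"
    using sep_same[OF A _ y(1)] by blast
  thus ?thesis using amg_in_P[OF A True] amg_in_notP[OF y(2)] by auto
next
  case False
  define U where "U = topspace X - A"
  have U: "openin X U" unfolding U_def using cl[OF A] by (simp add: openin_diff)
  have "disjnt (VV U) (amg_in j A ` topspace (E A))"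
    unfolding disjnt_def
  proof (rule ccontr)
    assume "VV U \<inter> amg_in j A ` topspace (E A) \<noteq> {}"
    then obtain v where v: "amg_in j A v \<in> VV U" by blast
    show False
    proof (rule amg_in_cases[of A v])
      fix a assume "a \<in> A" "v = j A a" "amg_in j A v = Inl a"
      thus False using v Inl_in_V[OF U, of a] U_def by simp
    next
      assume "v \<notin> j A ` A" "amg_in j A v = Inr (A, v)"
      hence "v \<in> WA A U" using v Inr_in_V[of A v U] by simp
      moreover have "U \<inter> A = {}" unfolding U_def by blast
      ultimately show False using Wext_empty[OF dns[OF A]] by simp
    qed
  qed
  moreover have "Inr (A,y) \<in> amg_in j A ` topspace (E A)"
    using y amg_in_notP[OF y(2)] by (metis imageI)
  moreover have "Inl x \<in> VV U" using x False U_def by (intro Inl_in_V2) simp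
  ultimately show ?thesis by (intro exI[of _ "VV U"] exI[of _ "amg_in j A ` topspace (E A)"] conjI open2 U
      open1[OF A] openin_topspace) auto
qed

lemma sep_rr:
  assumes A: "A \<in> AA" "y \<in> topspace (E A)" "y \<notin> j A ` A"
    and A': "A' \<in> AA" "y' \<in> topspace (E A')" "y' \<notin> j A' ` A'"
    and ne: "(A,y) \<noteq> (A',y')"
  shows "\<exists>U V. openin T U \<and> openin T V \<and> Inr (A,y) \<in> U \<and> Inr (A',y') \<in> V \<and> disjnt U V"
proof (cases "A = A'")
  case True
  have ne': "y \<noteq> y'" using ne True by simp
  have y't: "y' \<in> topspace (E A)" using A'(2) True by simp
  show ?thesis using sep_same[OF A(1,2) y't ne'] True amg_in_notP[OF A(3)] amg_in_notP[OF A'(3)] by auto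
next
  case False
  define V where "V = topspace (E A) - j A ` (A \<inter> A')"
  define V' where "V' = topspace (E A') - j A' ` (A' \<inter> A)"
  have oV: "openin (E A) V" unfolding V_def using LC[OF A(1) A'(1) False] by (simp add: openin_diff)
  have oV': "openin (E A') V'" unfolding V'_def using LC[OF A'(1) A(1)] False by (simp add: openin_diff)
  have yV: "y \<in> V" unfolding V_def using A by blast
  have yV': "y' \<in> V'" unfolding V'_def using A' by blast
  have "disjnt (amg_in j A ` V) (amg_in j A' ` V')"
    unfolding disjnt_def
  proof (rule ccontr)
    assume "amg_in j A ` V \<inter> amg_in j A' ` V' \<noteq> {}"
    then obtain v v' where v: "v \<in> V" "v' \<in> V'" "amg_in j A v = amg_in j A' v'" by blast
    show False
    proof (rule amg_in_cases[of A v])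
      fix a assume a: "a \<in> A" "v = j A a" "amg_in j A v = Inl a"
      hence "a \<in> A'" using v(3) amg_in_Inl[of A' v' a] by simp
      hence "v \<in> j A ` (A \<inter> A')" using a by simp
      thus False using v(1) V_def by simp
    next
      assume "v \<notin> j A ` A" "amg_in j A v = Inr (A, v)"
      thus False using v(3) amg_in_Inr[of A' v' A v] False by simp
    qed
  qed
  moreover have "Inr (A,y) \<in> amg_in j A ` V" using yV amg_in_notP[OF A(3)] by (metis imageI)
  moreover have "Inr (A',y') \<in> amg_in j A' ` V'" using yV' amg_in_notP[OF A'(3)] by (metis imageI)
  ultimately show ?thesis using open1[OF A(1) oV] open1[OF A'(1) oV'] by blast
qed

lemma Hausdorff_T:
  assumes HX: "Hausdorff_space X" and cl: "\<And>A. A \<in> AA \<Longrightarrow> closedin X A"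
  shows "Hausdorff_space T"
  unfolding Hausdorff_space_def
proof (intro allI impI)
  fix p q assume pq: "p \<in> topspace T \<and> q \<in> topspace T \<and> p \<noteq> q"
  have sw: "\<exists>U V. openin T U \<and> openin T V \<and> p \<in> U \<and> q \<in> V \<and> disjnt U V"
    if "\<exists>U V. openin T U \<and> openin T V \<and> q \<in> U \<and> p \<in> V \<and> disjnt U V"
    using that disjnt_sym by blast
  show "\<exists>U V. openin T U \<and> openin T V \<and> p \<in> U \<and> q \<in> V \<and> disjnt U V"
  proof (rule pt_cases[of p])
    fix x assume x: "x \<in> topspace X" "p = Inl x"
    show ?thesis
    proof (rule pt_cases[of q])
      fix x' assume x': "x' \<in> topspace X" "q = Inl x'"
      thus ?thesis using sep_ll[OF HX x(1) x'(1)] x pq by auto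
    next
      fix A y assume "A \<in> AA" "y \<in> topspace (E A)" "y \<notin> j A ` A" "q = Inr (A, y)"
      thus ?thesis using sep_lr[OF cl x(1)] x by blast
    qed (use pq in auto)
  next
    fix A y assume Ay: "A \<in> AA" "y \<in> topspace (E A)" "y \<notin> j A ` A" "p = Inr (A, y)"
    show ?thesis
    proof (rule pt_cases[of q])
      fix x' assume x': "x' \<in> topspace X" "q = Inl x'"
      thus ?thesis using sw sep_lr[OF cl x'(1) Ay(1-3)] Ay(4) by blast
    next
      fix A' y' assume A': "A' \<in> AA" "y' \<in> topspace (E A')" "y' \<notin> j A' ` A'" "q = Inr (A', y')"
      thus ?thesis using sep_rr[OF Ay(1-3) A'(1-3)] Ay(4) pq by auto
    qed (use pq in auto)
  qed (use pq in auto)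
qed

end


context amgc begin

lemma compact_T:
  assumes cs: "\<And>A. A \<in> AA \<Longrightarrow> compact_space (E A)"
    and K: "compactin X (topspace X - \<Union>AA)"
    and A4: "\<forall>\<U>. (\<forall>U\<in>\<U>. openin X U) \<and> topspace X - \<Union>AA \<subseteq> \<Union>\<U> \<longrightarrow>
        (\<exists>\<A>'. finite \<A>' \<and> \<A>' \<subseteq> AA \<and> (\<forall>A\<in>AA - \<A>'. \<exists>U\<in>\<U>. A \<subseteq> U \<union> \<Union>\<A>'))"
  shows "compact_space T"
  unfolding compact_space_alt
proof (intro allI impI)
  fix \<U> assume U: "(\<forall>U\<in>\<U>. openin T U) \<and> topspace T \<subseteq> \<Union>\<U>"
  define \<V> where "\<V> = {U. openin X U \<and> (\<exists>N\<in>\<U>. VV U \<subseteq> N)}"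
  have KV: "topspace X - \<Union>AA \<subseteq> \<Union>\<V>"
  proof
    fix x assume x: "x \<in> topspace X - \<Union>AA"
    have "Inl x \<in> topspace T" using Inl_top x by blast
    then obtain N where N: "N \<in> \<U>" "Inl x \<in> N" using U by blast
    have "generate_topology_on SS N" using U N(1) gen_open by blast
    then obtain V where V: "openin X V" "x \<in> V" "VV V \<subseteq> N" using N2 x N(2) by blast
    hence "V \<in> \<V>" unfolding \<V>_def using N(1) by blast
    thus "x \<in> \<Union>\<V>" using V(2) by blast
  qed
  have "\<forall>V\<in>\<V>. openin X V" unfolding \<V>_def by blast
  then obtain \<V>0 where V0: "finite \<V>0" "\<V>0 \<subseteq> \<V>" "topspace X - \<Union>AA \<subseteq> \<Union>\<V>0"
    using K KV unfolding compactin_def by meson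
  have V0o: "\<forall>V\<in>\<V>0. openin X V" using V0(2) unfolding \<V>_def by blast
  have "\<exists>\<A>'. finite \<A>' \<and> \<A>' \<subseteq> AA \<and> (\<forall>A\<in>AA - \<A>'. \<exists>U\<in>\<V>0. A \<subseteq> U \<union> \<Union>\<A>')"
  proof -
    have P: "(\<forall>U\<in>\<V>0. openin X U) \<and> topspace X - \<Union>AA \<subseteq> \<Union>\<V>0" using V0o V0(3) by (rule conjI)
    have "(\<forall>U\<in>\<V>0. openin X U) \<and> topspace X - \<Union>AA \<subseteq> \<Union>\<V>0 \<longrightarrow>
        (\<exists>\<A>'. finite \<A>' \<and> \<A>' \<subseteq> AA \<and> (\<forall>A\<in>AA - \<A>'. \<exists>U\<in>\<V>0. A \<subseteq> U \<union> \<Union>\<A>'))"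
      using A4 by (rule spec)
    thus ?thesis using P by (rule mp)
  qed
  then obtain \<A>' where A'all: "finite \<A>' \<and> \<A>' \<subseteq> AA \<and> (\<forall>A\<in>AA - \<A>'. \<exists>U\<in>\<V>0. A \<subseteq> U \<union> \<Union>\<A>')" ..
  note A' = conjunct1[OF A'all] conjunct1[OF conjunct2[OF A'all]] conjunct2[OF conjunct2[OF A'all]]
  have "\<forall>V\<in>\<V>0. \<exists>N. N \<in> \<U> \<and> VV V \<subseteq> N" using V0(2) unfolding \<V>_def by blast
  from bchoice[OF this] obtain NU where NU: "\<forall>V\<in>\<V>0. NU V \<in> \<U> \<and> VV V \<subseteq> NU V" ..
  have "\<forall>A\<in>\<A>'. \<exists>F. finite F \<and> F \<subseteq> \<U> \<and> amg_in j A ` topspace (E A) \<subseteq> \<Union>F"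
  proof
    fix A assume "A \<in> \<A>'"
    hence A: "A \<in> AA" using A'(2) by blast
    have cE: "compactin (E A) (topspace (E A))" using cs[OF A] unfolding compact_space_def .
    have C: "compactin T (amg_in j A ` topspace (E A))"
      by (rule image_compactin[OF cE amg_in_cont[OF A]])
    have s1: "amg_in j A ` topspace (E A) \<subseteq> topspace T" using amg_in_top[OF A] by (rule image_subsetI)
    have s2: "amg_in j A ` topspace (E A) \<subseteq> \<Union>\<U>" using s1 conjunct2[OF U] by (rule subset_trans)
    have Uo: "\<forall>U\<in>\<U>. openin T U" using conjunct1[OF U] .
    show "\<exists>F. finite F \<and> F \<subseteq> \<U> \<and> amg_in j A ` topspace (E A) \<subseteq> \<Union>F"
      using conjunct2[OF C[unfolded compactin_def], rule_format, OF conjI[OF Uo s2]] .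
  qed
  from bchoice[OF this] obtain FA where FA: "\<forall>A\<in>\<A>'. finite (FA A) \<and> FA A \<subseteq> \<U> \<and> amg_in j A ` topspace (E A) \<subseteq> \<Union>(FA A)" ..
  define F where "F = NU ` \<V>0 \<union> \<Union>(FA ` \<A>')"
  have "finite F" unfolding F_def using V0(1) A'(1) FA by auto
  moreover have "F \<subseteq> \<U>" unfolding F_def using NU FA by blast
  moreover have inFA: "amg_in j A y \<in> \<Union>F" if "A \<in> \<A>'" "y \<in> topspace (E A)" for A y
  proof -
    have "amg_in j A y \<in> \<Union>(FA A)" using FA that by blast
    moreover have "FA A \<subseteq> F" unfolding F_def using that(1) by blast
    ultimately show ?thesis by blast
  qed
  moreover have inNU: "p \<in> \<Union>F" if "V \<in> \<V>0" "p \<in> VV V" for V p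
  proof -
    have "p \<in> NU V" using NU that by blast
    moreover have "NU V \<in> F" unfolding F_def using that(1) by blast
    ultimately show ?thesis by blast
  qed
  moreover have inl: "Inl x \<in> \<Union>F" if x: "x \<in> topspace X" for x
  proof -
    have inA': "Inl x \<in> \<Union>F" if "x \<in> A" "A \<in> \<A>'" for A
    proof -
      have A: "A \<in> AA" using that(2) A'(2) by blast
      have "j A x \<in> topspace (E A)" using PsubA[OF A] that(1) by blast
      hence "amg_in j A (j A x) \<in> \<Union>F" using inFA[OF that(2)] by blast
      thus ?thesis using amg_in_P[OF A that(1)] by simp
    qed
    show ?thesis
    proof (cases "x \<in> \<Union>AA")
      case False
      then obtain V where "V \<in> \<V>0" "x \<in> V" using V0(3) x by blast
      thus ?thesis using inNU Inl_in_V2 by blast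
    next
      case True
      then obtain A where A: "A \<in> AA" "x \<in> A" by blast
      show ?thesis
      proof (cases "A \<in> \<A>'")
        case True thus ?thesis using inA' A by blast
      next
        case False
        then obtain V where V: "V \<in> \<V>0" "A \<subseteq> V \<union> \<Union>\<A>'" using A' A by blast
        hence "x \<in> V \<or> x \<in> \<Union>\<A>'" using A(2) by blast
        thus ?thesis
        proof
          assume "x \<in> V" thus ?thesis by (rule inNU[OF V(1) Inl_in_V2])
        next
          assume "x \<in> \<Union>\<A>'"
          then obtain A2 where "A2 \<in> \<A>'" "x \<in> A2" by blast
          thus ?thesis by (intro inA')
        qed
      qed
    qed
  qed
  moreover have "topspace T \<subseteq> \<Union>F"
  proof
    fix p assume p: "p \<in> topspace T"
    show "p \<in> \<Union>F"
    proof (rule pt_cases[OF p])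
      fix x assume "x \<in> topspace X" "p = Inl x" thus ?thesis using inl by blast
    next
      fix A y assume Ay: "A \<in> AA" "y \<in> topspace (E A)" "y \<notin> j A ` A" "p = Inr (A, y)"
      have pa: "p = amg_in j A y" using Ay(3,4) amg_in_notP by simp
      show ?thesis
      proof (cases "A \<in> \<A>'")
        case True thus ?thesis using inFA[OF True Ay(2)] by (simp add: pa)
      next
        case False
        then obtain V where V: "V \<in> \<V>0" "A \<subseteq> V \<union> \<Union>\<A>'" using A'(3) Ay(1) by blast
        have Vo: "openin X V" using V0o V(1) by blast
        define L where "L = \<Union>((\<lambda>A'. j A ` (A \<inter> A')) ` \<A>')"
        have Lc: "closedin (E A) L" unfolding L_def
        proof (rule closedin_Union)
          show "finite ((\<lambda>A'. j A ` (A \<inter> A')) ` \<A>')" using A'(1) by simp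
          fix S assume "S \<in> (\<lambda>A'. j A ` (A \<inter> A')) ` \<A>'"
          then obtain A2 where A2: "A2 \<in> \<A>'" "S = j A ` (A \<inter> A2)" by blast
          have "A \<noteq> A2" using False A2(1) by blast
          moreover have "A2 \<in> AA" using A2(1) A'(2) by blast
          ultimately show "closedin (E A) S" using LC[OF Ay(1)] A2(2) by simp
        qed
        have LP: "L \<subseteq> j A ` A" unfolding L_def by (intro UN_least image_mono Int_lower1)
        obtain W0 where W0: "openin (E A) W0" "W0 \<inter> j A ` A = j A ` (V \<inter> A)" using exW[OF Ay(1) Vo] by blast
        define W where "W = W0 \<union> (topspace (E A) - L)"
        have Wo: "openin (E A) W" unfolding W_def using W0(1) Lc by (intro openin_Un openin_diff openin_topspace)
        have Wt: "W \<inter> j A ` A = j A ` (V \<inter> A)"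
        proof (intro equalityI subsetI)
          fix z assume z: "z \<in> W \<inter> j A ` A"
          hence zP: "z \<in> j A ` A" by simp
          then obtain a where a: "a \<in> A" "z = j A a" by blast
          show "z \<in> j A ` (V \<inter> A)"
          proof (cases "z \<in> W0")
            case True
            hence "z \<in> W0 \<inter> j A ` A" using zP by simp
            thus ?thesis using W0(2) by simp
          next
            case False
            hence zL: "z \<notin> L" using z W_def by simp
            have "a \<notin> \<Union>\<A>'"
            proof
              assume "a \<in> \<Union>\<A>'"
              then obtain A2 where A2: "A2 \<in> \<A>'" "a \<in> A2" by blast
              hence "z \<in> j A ` (A \<inter> A2)" using a by simp
              hence "z \<in> L" unfolding L_def using A2(1) by blast
              thus False using zL by simp
            qed
            hence "a \<in> V" using V(2) a(1) by blast
            thus ?thesis using a by simp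
          qed
        next
          fix z assume "z \<in> j A ` (V \<inter> A)"
          hence "z \<in> W0 \<inter> j A ` A" using W0(2) by simp
          thus "z \<in> W \<inter> j A ` A" using W_def by simp
        qed
        have "y \<notin> L" using LP Ay(3) by blast
        hence "y \<in> W" using Ay(2) W_def by simp
        hence "y \<in> WA A V" by (rule subsetD[OF Wext_sub[OF Wo Wt]])
        hence "p \<in> VV V" using amg_in_in_V[OF Ay(1)] pa by simp
        thus ?thesis by (rule inNU[OF V(1)])
      qed
    qed
  qed
  ultimately show "\<exists>F. finite F \<and> F \<subseteq> \<U> \<and> topspace T \<subseteq> \<Union>F" by blast
qed

end


lemma gf_parts:
  assumes "good_family X AA"
  shows "\<And>A. A \<in> AA \<Longrightarrow> A \<subseteq> topspace X" "\<And>A. A \<in> AA \<Longrightarrow> openin X A"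
    "\<And>A. A \<in> AA \<Longrightarrow> closedin X A"
    "\<And>A A'. A \<in> AA \<Longrightarrow> A' \<in> AA \<Longrightarrow> A \<noteq> A' \<Longrightarrow> compactin X (A \<inter> A')"
    "compactin X (topspace X - \<Union>AA)"
    "\<forall>\<U>. (\<forall>U\<in>\<U>. openin X U) \<and> topspace X - \<Union>AA \<subseteq> \<Union>\<U> \<longrightarrow>
        (\<exists>\<A>'. finite \<A>' \<and> \<A>' \<subseteq> AA \<and> (\<forall>A\<in>AA - \<A>'. \<exists>U\<in>\<U>. A \<subseteq> U \<union> \<Union>\<A>'))"
proof -
  note g = assms[unfolded good_family_def]
  note g1 = conjunct1[OF g] and g2 = conjunct1[OF conjunct2[OF g]]
    and g3 = conjunct1[OF conjunct2[OF conjunct2[OF g]]]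
    and g4 = conjunct1[OF conjunct2[OF conjunct2[OF conjunct2[OF g]]]]
    and g5 = conjunct2[OF conjunct2[OF conjunct2[OF conjunct2[OF g]]]]
  show "\<And>A. A \<in> AA \<Longrightarrow> A \<subseteq> topspace X" using g1 by (rule bspec)
  show "\<And>A. A \<in> AA \<Longrightarrow> openin X A" using g2 by simp
  show "\<And>A. A \<in> AA \<Longrightarrow> closedin X A" using g2 by simp
  show "\<And>A A'. A \<in> AA \<Longrightarrow> A' \<in> AA \<Longrightarrow> A \<noteq> A' \<Longrightarrow> compactin X (A \<inter> A')" using g3 by simp
  show "compactin X (topspace X - \<Union>AA)" by (rule g4)
  show "\<forall>\<U>. (\<forall>U\<in>\<U>. openin X U) \<and> topspace X - \<Union>AA \<subseteq> \<Union>\<U> \<longrightarrow>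
        (\<exists>\<A>'. finite \<A>' \<and> \<A>' \<subseteq> AA \<and> (\<forall>A\<in>AA - \<A>'. \<exists>U\<in>\<U>. A \<subseteq> U \<union> \<Union>\<A>'))" by (rule g5)
qed

lemma amgl_of:
  assumes "good_family X AA" "amalg_data X AA E j"
  shows "amgl X AA E j"
  using gf_parts(1,2)[OF assms(1)] assms(2) unfolding amalg_data_def amgl_def by blast

lemma amgc_of:
  assumes gf: "good_family X AA" and c: "\<forall>A\<in>AA. is_compactification (subtopology X A) (C A) (c A)"
  shows "amgc X AA C c"
proof -
  have "amalg_data X AA C c" using c unfolding amalg_data_def is_compactification_def
    by (simp add: Int_absorb1 gf_parts(1)[OF gf])
  hence "amgl X AA C c" by (rule amgl_of[OF gf])
  moreover have "amgc_axioms X AA C" unfolding amgc_axioms_def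
    using c gf_parts(4)[OF gf] unfolding is_compactification_def by blast
  ultimately show ?thesis by (simp add: amgc_def)
qed

lemma amg_compactification:
  assumes gf: "good_family X AA" and HX: "Hausdorff_space X"
    and c: "\<forall>A\<in>AA. is_compactification (subtopology X A) (C A) (c A)"
  shows "is_compactification X (Amg X AA C c) Inl"
proof -
  interpret amgc X AA C c by (rule amgc_of[OF gf c])
  have cs: "\<And>A. A \<in> AA \<Longrightarrow> compact_space (C A)" using c unfolding is_compactification_def by blast
  show ?thesis unfolding is_compactification_def
    by (intro conjI compact_T[OF cs gf_parts(5)[OF gf] gf_parts(6)[OF gf]]
      Hausdorff_T[OF HX gf_parts(3)[OF gf]] Inl_emb dense_T)
qed

lemma regular_amg:
  assumes gf: "good_family X AA" and HX: "Hausdorff_space X"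
    and c: "\<forall>A\<in>AA. is_compactification (subtopology X A) (C A) (c A)"
  shows "regular_space (Amg X AA C c)"
  using amg_compactification[OF assms] unfolding is_compactification_def
  by (intro compact_Hausdorff_imp_regular_space) auto

lemma part3:
  assumes gf: "good_family X AA" and HX: "Hausdorff_space X"
    and c: "\<forall>A\<in>AA. is_compactification (subtopology X A) (C A) (c A)"
    and d: "\<forall>A\<in>AA. is_compactification (subtopology X A) (D A) (d A)"
    and le: "\<forall>A\<in>AA. compactification_le (subtopology X A) (C A) (c A) (D A) (d A)"
  shows "compactification_le X (Amg X AA C c) Inl (Amg X AA D d) Inl"
proof -
  interpret Cc: amgc X AA C c by (rule amgc_of[OF gf c])
  interpret Dd: amgc X AA D d by (rule amgc_of[OF gf d])
  have "\<forall>A\<in>AA. \<exists>g. continuous_map (D A) (C A) g \<and> (\<forall>x\<in>topspace (subtopology X A). g (d A x) = c A x)"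
    using le unfolding compactification_le_def by blast
  from bchoice[OF this] obtain G where G: "\<forall>A\<in>AA. continuous_map (D A) (C A) (G A) \<and>
      (\<forall>x\<in>topspace (subtopology X A). G A (d A x) = c A x)" ..
  define F where "F p = (case p of Inl x \<Rightarrow> Inl x | Inr (A,y) \<Rightarrow> amg_in c A (G A y))" for p
  have reg: "regular_space (Amg X AA C c)" by (rule regular_amg[OF gf HX c])
  have "continuous_map (Amg X AA D d) (Amg X AA C c) F"
    unfolding Dd.cont_iff[OF reg]
  proof (intro conjI ballI)
    show "continuous_map X (Amg X AA C c) (\<lambda>x. F (Inl x))"
      unfolding F_def using Cc.Inl_cont by simp
    fix A assume A: "A \<in> AA"
    have GA: "continuous_map (D A) (C A) (G A)" using G A by blast
    show "continuous_map (D A) (Amg X AA C c) (\<lambda>y. F (amg_in d A y))"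
    proof (rule continuous_map_eq)
      show "continuous_map (D A) (Amg X AA C c) (amg_in c A \<circ> G A)"
        by (rule continuous_map_compose[OF GA Cc.amg_in_cont[OF A]])
      fix y assume y: "y \<in> topspace (D A)"
      show "(amg_in c A \<circ> G A) y = F (amg_in d A y)"
      proof (rule Dd.amg_in_cases[of A y])
        fix a assume a: "a \<in> A" "y = d A a" "amg_in d A y = Inl a"
        have "a \<in> topspace (subtopology X A)" using a(1) Cc.tsub[OF A] by simp
        hence "G A y = c A a" using G A a(2) by blast
        thus ?thesis using a(3) Cc.amg_in_P[OF A a(1)] F_def by simp
      next
        assume "y \<notin> d A ` A" "amg_in d A y = Inr (A, y)"
        thus ?thesis using F_def by simp
      qed
    qed
  qed
  moreover have "\<forall>x\<in>topspace X. F (Inl x) = Inl x" unfolding F_def by simp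
  ultimately show ?thesis unfolding compactification_le_def by (intro exI[of _ F] conjI)
qed

lemma part4:
  assumes gf: "good_family X AA" and K: "is_compactification X K k"
  shows "compactification_le X K k (Amg X AA (\<lambda>A. subtopology K (K closure_of (k ` A))) (\<lambda>A. k)) Inl"
proof -
  define E where "E A = subtopology K (K closure_of (k ` A))" for A
  have embk: "embedding_map X K k" using K unfolding is_compactification_def by blast
  have kcont: "continuous_map X K k" using embk unfolding embedding_map_def
    using homeomorphic_imp_continuous_map continuous_map_in_subtopology by blast
  have kX: "k ` topspace X \<subseteq> topspace K" using continuous_map_image_subset_topspace[OF kcont] .
  have "amalg_data X AA E (\<lambda>A. k)"
    unfolding amalg_data_def
  proof (intro ballI conjI)
    fix A assume A: "A \<in> AA"
    have As: "A \<subseteq> topspace X" using gf_parts(1)[OF gf A] .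
    have kA: "k ` A \<subseteq> topspace K" using As kX by blast
    have h: "homeomorphic_map X (subtopology K (k ` topspace X)) k" using embk unfolding embedding_map_def .
    have "homeomorphic_map (subtopology X A) (subtopology (subtopology K (k ` topspace X)) (k ` (topspace X \<inter> A))) k"
      by (rule homeomorphic_map_subtopologies[OF h]) (use kX in auto)
    moreover have "subtopology (subtopology K (k ` topspace X)) (k ` (topspace X \<inter> A)) = subtopology K (k ` (topspace X \<inter> A))"
      by (simp add: subtopology_subtopology Int_absorb1 image_mono)
    ultimately have "embedding_map (subtopology X A) K k"
      unfolding embedding_map_def by simp
    moreover have "k ` topspace (subtopology X A) \<subseteq> K closure_of (k ` A)"
      using closure_of_subset[OF kA] by auto
    ultimately show "embedding_map (subtopology X A) (E A) k"
      unfolding E_def by (simp add: embedding_map_in_subtopology)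
    have "k ` A \<subseteq> K closure_of (k ` A)" using closure_of_subset[OF kA] .
    thus "E A closure_of (k ` A) = topspace (E A)"
      unfolding E_def using closure_of_subset_topspace[of K "k ` A"]
      by (simp add: closure_of_subtopology Int_absorb1 Int_absorb2)
  qed
  then interpret amgl X AA E "\<lambda>A. k" by (rule amgl_of[OF gf])
  have reg: "regular_space K" using K unfolding is_compactification_def
    by (intro compact_Hausdorff_imp_regular_space) auto
  define F where "F p = (case p of Inl x \<Rightarrow> k x | Inr (A::'a set,y) \<Rightarrow> y)" for p
  have "continuous_map (Amg X AA E (\<lambda>A. k)) K F"
    unfolding cont_iff[OF reg]
  proof (intro conjI ballI)
    show "continuous_map X K (\<lambda>x. F (Inl x))" unfolding F_def using kcont by simp
    fix A assume A: "A \<in> AA"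
    show "continuous_map (E A) K (\<lambda>y. F (amg_in (\<lambda>A. k) A y))"
    proof (rule continuous_map_eq)
      show "continuous_map (E A) K id" unfolding E_def
        by (rule continuous_map_from_subtopology[OF continuous_map_id])
      fix y assume y: "y \<in> topspace (E A)"
      show "id y = F (amg_in (\<lambda>A. k) A y)"
      proof (rule amg_in_cases[of A y])
        fix a assume a: "a \<in> A" "y = k a" "amg_in (\<lambda>A. k) A y = Inl a"
        thus ?thesis using F_def by simp
      next
        assume "y \<notin> k ` A" "amg_in (\<lambda>A. k) A y = Inr (A, y)"
        thus ?thesis using F_def by simp
      qed
    qed
  qed
  moreover have "\<forall>x\<in>topspace X. F (Inl x) = k x" unfolding F_def by simp
  moreover have "E = (\<lambda>A. subtopology K (K closure_of (k ` A)))" by (rule ext) (simp add: E_def)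
  ultimately show ?thesis unfolding compactification_le_def by (intro exI[of _ F]) simp
qed

lemma part5:
  assumes gf: "good_family X AA" and HX: "Hausdorff_space X"
    and b: "\<forall>A\<in>AA. is_stone_cech (subtopology X A) (B A) (b A)"
  shows "is_stone_cech X (Amg X AA B b) Inl"
proof -
  have c: "\<forall>A\<in>AA. is_compactification (subtopology X A) (B A) (b A)"
  proof
    fix A assume "A \<in> AA"
    hence "is_stone_cech (subtopology X A) (B A) (b A)" using b by blast
    thus "is_compactification (subtopology X A) (B A) (b A)" unfolding is_stone_cech_def by (rule conjunct1)
  qed
  interpret amgc X AA B b by (rule amgc_of[OF gf c])
  have comp: "is_compactification X (Amg X AA B b) Inl" by (rule amg_compactification[OF gf HX c])
  show ?thesis unfolding is_stone_cech_def
  proof (intro conjI comp allI impI)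
    fix f :: "'a \<Rightarrow> real"
    assume f: "continuous_map X euclideanreal f \<and> bounded (f ` topspace X)"
    have "\<forall>A\<in>AA. \<exists>g. continuous_map (B A) euclideanreal g \<and> (\<forall>x\<in>topspace (subtopology X A). g (b A x) = f x)"
    proof
      fix A assume A: "A \<in> AA"
      have "continuous_map (subtopology X A) euclideanreal f"
        using f by (intro continuous_map_from_subtopology) blast
      moreover have "bounded (f ` topspace (subtopology X A))"
        using f by (rule bounded_subset[OF conjunct2]) auto
      ultimately have fc: "continuous_map (subtopology X A) euclideanreal f \<and> bounded (f ` topspace (subtopology X A))"
        by (rule conjI)
      have "is_stone_cech (subtopology X A) (B A) (b A)" using b A by blast
      hence "\<forall>f. continuous_map (subtopology X A) euclideanreal f \<and> bounded (f ` topspace (subtopology X A)) \<longrightarrow>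
        (\<exists>g. continuous_map (B A) euclideanreal g \<and> (\<forall>x\<in>topspace (subtopology X A). g (b A x) = f x))"
        unfolding is_stone_cech_def by (rule conjunct2)
      hence "continuous_map (subtopology X A) euclideanreal f \<and> bounded (f ` topspace (subtopology X A)) \<longrightarrow>
        (\<exists>g. continuous_map (B A) euclideanreal g \<and> (\<forall>x\<in>topspace (subtopology X A). g (b A x) = f x))"
        by (rule spec)
      thus "\<exists>g. continuous_map (B A) euclideanreal g \<and> (\<forall>x\<in>topspace (subtopology X A). g (b A x) = f x)"
        using fc by (rule mp)
    qed
    from bchoice[OF this] obtain G where G: "\<forall>A\<in>AA. continuous_map (B A) euclideanreal (G A) \<and>
        (\<forall>x\<in>topspace (subtopology X A). G A (b A x) = f x)" ..
    define F where "F p = (case p of Inl x \<Rightarrow> f x | Inr (A,y) \<Rightarrow> G A y)" for p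
    have "continuous_map (Amg X AA B b) euclideanreal F"
      unfolding cont_iff[OF regular_space_euclidean]
    proof (intro conjI ballI)
      show "continuous_map X euclideanreal (\<lambda>x. F (Inl x))" unfolding F_def using f by simp
      fix A assume A: "A \<in> AA"
      show "continuous_map (B A) euclideanreal (\<lambda>y. F (amg_in b A y))"
      proof (rule continuous_map_eq)
        show "continuous_map (B A) euclideanreal (G A)" using G A by blast
        fix y assume y: "y \<in> topspace (B A)"
        show "G A y = F (amg_in b A y)"
        proof (rule amg_in_cases[of A y])
          fix a assume a: "a \<in> A" "y = b A a" "amg_in b A y = Inl a"
          have "a \<in> topspace (subtopology X A)" using a(1) tsub[OF A] by simp
          hence "G A y = f a" using G A a(2) by blast
          thus ?thesis using a(3) F_def by simp
        next
          assume "y \<notin> b A ` A" "amg_in b A y = Inr (A, y)"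
          thus ?thesis using F_def by simp
        qed
      qed
    qed
    moreover have "\<forall>x\<in>topspace X. F (Inl x) = f x" unfolding F_def by simp
    ultimately show "\<exists>g. continuous_map (Amg X AA B b) euclideanreal g \<and> (\<forall>x\<in>topspace X. g (Inl x) = f x)"
      by (intro exI[of _ F] conjI)
  qed
qed

theorem proposition7p14:
  fixes X :: "'a topology" and \<A> :: "'a set set"
  assumes "Tychonoff_space X" and "good_family X \<A>"
  shows
    "(\<forall>(E :: 'a set \<Rightarrow> 'b topology) j (Z :: 'z topology) f.
        amalg_data X \<A> E j \<and> regular_space Z \<longrightarrow>
        (continuous_map (Amg X \<A> E j) Z f \<longleftrightarrow>
           continuous_map X Z (\<lambda>x. f (Inl x)) \<and>
           (\<forall>A\<in>\<A>. continuous_map (E A) Z (\<lambda>y. f (amg_in j A y))))) \<and>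
    (\<forall>(C :: 'a set \<Rightarrow> 'c topology) c.
        (\<forall>A\<in>\<A>. is_compactification (subtopology X A) (C A) (c A)) \<longrightarrow>
        is_compactification X (Amg X \<A> C c) Inl) \<and>
    (\<forall>(C :: 'a set \<Rightarrow> 'c topology) c (D :: 'a set \<Rightarrow> 'd topology) d.
        (\<forall>A\<in>\<A>. is_compactification (subtopology X A) (C A) (c A)) \<and>
        (\<forall>A\<in>\<A>. is_compactification (subtopology X A) (D A) (d A)) \<and>
        (\<forall>A\<in>\<A>. compactification_le (subtopology X A) (C A) (c A) (D A) (d A)) \<longrightarrow>
        compactification_le X (Amg X \<A> C c) Inl (Amg X \<A> D d) Inl) \<and>
    (\<forall>(K :: 'e topology) k. is_compactification X K k \<longrightarrow>
        compactification_le X K k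
          (Amg X \<A> (\<lambda>A. subtopology K (K closure_of (k ` A))) (\<lambda>A. k)) Inl) \<and>
    (\<forall>(B :: 'a set \<Rightarrow> 'f topology) b.
        (\<forall>A\<in>\<A>. is_stone_cech (subtopology X A) (B A) (b A)) \<longrightarrow>
        is_stone_cech X (Amg X \<A> B b) Inl)"
proof (intro conjI allI impI)
  have HX: "Hausdorff_space X" using assms(1) unfolding Tychonoff_space_def by blast
  note gf = assms(2)
  fix E :: "'a set \<Rightarrow> 'b topology" and j and Z :: "'z topology" and f
  assume a: "amalg_data X \<A> E j \<and> regular_space Z"
  interpret amgl X \<A> E j by (rule amgl_of[OF gf conjunct1[OF a]])
  show "continuous_map (Amg X \<A> E j) Z f \<longleftrightarrow>
           continuous_map X Z (\<lambda>x. f (Inl x)) \<and>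
           (\<forall>A\<in>\<A>. continuous_map (E A) Z (\<lambda>y. f (amg_in j A y)))"
    by (rule cont_iff[OF conjunct2[OF a]])
next
  have HX: "Hausdorff_space X" using assms(1) unfolding Tychonoff_space_def by blast
  fix C :: "'a set \<Rightarrow> 'c topology" and c
  assume "\<forall>A\<in>\<A>. is_compactification (subtopology X A) (C A) (c A)"
  thus "is_compactification X (Amg X \<A> C c) Inl" by (rule amg_compactification[OF assms(2) HX])
next
  have HX: "Hausdorff_space X" using assms(1) unfolding Tychonoff_space_def by blast
  fix C :: "'a set \<Rightarrow> 'c topology" and c and D :: "'a set \<Rightarrow> 'd topology" and d
  assume a: "(\<forall>A\<in>\<A>. is_compactification (subtopology X A) (C A) (c A)) \<and>
        (\<forall>A\<in>\<A>. is_compactification (subtopology X A) (D A) (d A)) \<and>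
        (\<forall>A\<in>\<A>. compactification_le (subtopology X A) (C A) (c A) (D A) (d A))"
  show "compactification_le X (Amg X \<A> C c) Inl (Amg X \<A> D d) Inl"
    by (rule part3[OF assms(2) HX conjunct1[OF a] conjunct1[OF conjunct2[OF a]] conjunct2[OF conjunct2[OF a]]])
next
  fix K :: "'e topology" and k
  assume "is_compactification X K k"
  thus "compactification_le X K k (Amg X \<A> (\<lambda>A. subtopology K (K closure_of (k ` A))) (\<lambda>A. k)) Inl"
    by (rule part4[OF assms(2)])
next
  have HX: "Hausdorff_space X" using assms(1) unfolding Tychonoff_space_def by blast
  fix B :: "'a set \<Rightarrow> 'f topology" and b
  assume "\<forall>A\<in>\<A>. is_stone_cech (subtopology X A) (B A) (b A)"
  thus "is_stone_cech X (Amg X \<A> B b) Inl" by (rule part5[OF assms(2) HX])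
qed


end
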